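(* Let $\beta$ be a parameter and consider the map $\varphi:(x_0,x_1,x_2,x_3)\mapsto\big(x_1,x_2,x_3,(x_1x_3+\beta)/x_0\big)$ on $\mathbb{C}^4$, equivalently the recurrence $$x_{n+2}x_{n-2}=x_{n+1}x_{n-1}+\beta.$$ Define $$\mathcal{Q}_0=\frac{x_0+x_2}{x_1},\qquad \mathcal{Q}_1=\frac{x_1+x_3}{x_2},\qquad \mathcal{Q}_2=\frac{x_1}{x_0}+\frac{x_2}{x_3}+\frac{\beta}{x_0x_3},$$ and $$\tilde{\mathcal{J}}_1=\mathcal{Q}_0\mathcal{Q}_1\mathcal{Q}_2-\mathcal{Q}_0-\mathcal{Q}_1-\mathcal{Q}_2,\quad \tilde{\mathcal{J}}_2=\mathcal{Q}_0\mathcal{Q}_1+\mathcal{Q}_1\mathcal{Q}_2+\mathcal{Q}_2\mathcal{Q}_0-3,\quad \tilde{\mathcal{J}}_3=\mathcal{Q}_0\mathcal{Q}_1\mathcal{Q}_2.$$ Then $\varphi$ is superintegrable: $\tilde{\mathcal{J}}_1,\tilde{\mathcal{J}}_2,\tilde{\mathcal{J}}_3$ are three independent conserved quantities of $\varphi$, with $\{\tilde{\mathcal{J}}_1,\tilde{\mathcal{J}}_2\}_0=0=\{\tilde{\mathcal{J}}_1,\tilde{\mathcal{J}}_3\}_0$ and $\{\tilde{\mathcal{J}}_1,\mathcal{Q}_j\}_0=0$ for $j=0,1,2$, where $\{\cdot,\cdot\}_0$ is the Poisson bracket defined by $\{x_0,x_1\}_0=x_0x_1$, $\{x_0,x_2\}_0=0$,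 $\{x_0,x_3\}_0=x_0x_3$, $\{x_1,x_2\}_0=x_1x_2$, $\{x_1,x_3\}_0=0$, $\{x_2,x_3\}_0=x_2x_3$. The iterates satisfy the sixth-order linear recurrence $$x_{n+6}-\tilde{\mathcal{J}}_1\,x_{n+3}+x_n=0,$$ and the solution of the initial value problem is $$x_{3n+j}=\tilde{\mathcal{A}}_j\,T_n(\tilde{\mathcal{J}}_1/2)+\tilde{\mathcal{B}}_j\,U_n(\tilde{\mathcal{J}}_1/2),\qquad j=0,1,2,$$ where $T_n,U_n$ are the Chebyshev polynomials of the first and second kind and $$\tilde{\mathcal{A}}_j=2x_j-\frac{2x_{j+3}}{\tilde{\mathcal{J}}_1},\qquad \tilde{\mathcal{B}}_j=-x_j+\frac{2x_{j+3}}{\tilde{\mathcal{J}}_1},\qquad j=0,1,2.$$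
   Context: A conserved quantity of $\varphi$ is a function $F$ on $\mathbb{C}^4$ with $F\circ\varphi=F$. Superintegrable here means having $3$ (one less than the phase-space dimension) independent conserved quantities. The Poisson bracket is extended to rational functions by bilinearity and the Leibniz rule. The $\mathcal{Q}_j$ and $\tilde{\mathcal{J}}_1$ are evaluated at the initial data $(x_0,x_1,x_2,x_3)$, and $x_3,x_4,x_5$ denote iterates of the recurrence. *)

theory Defs
  imports "HOL-Analysis.Analysis"
begin

text \<open>Points of C^4 are represented as functions nat => complex; only the
entries 0,1,2,3 are meaningful (x i = x_i).\<close>

definition phi :: "complex \<Rightarrow> (nat \<Rightarrow> complex) \<Rightarrow> (nat \<Rightarrow> complex)" where
  "phi \<beta> x = (\<lambda>i. if i < 3 then x (Suc i)
                   else if i = 3 then (x 1 * x 3 + \<beta>) / x 0 else 0)"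

definition Q0 :: "complex \<Rightarrow> (nat \<Rightarrow> complex) \<Rightarrow> complex" where
  "Q0 \<beta> x = (x 0 + x 2) / x 1"

definition Q1 :: "complex \<Rightarrow> (nat \<Rightarrow> complex) \<Rightarrow> complex" where
  "Q1 \<beta> x = (x 1 + x 3) / x 2"

definition Q2 :: "complex \<Rightarrow> (nat \<Rightarrow> complex) \<Rightarrow> complex" where
  "Q2 \<beta> x = x 1 / x 0 + x 2 / x 3 + \<beta> / (x 0 * x 3)"

definition J1 :: "complex \<Rightarrow> (nat \<Rightarrow> complex) \<Rightarrow> complex" where
  "J1 \<beta> x = Q0 \<beta> x * Q1 \<beta> x * Q2 \<beta> x - Q0 \<beta> x - Q1 \<beta> x - Q2 \<beta> x"

definition J2 :: "complex \<Rightarrow> (nat \<Rightarrow> complex) \<Rightarrow> complex" where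
  "J2 \<beta> x = Q0 \<beta> x * Q1 \<beta> x + Q1 \<beta> x * Q2 \<beta> x + Q2 \<beta> x * Q0 \<beta> x - 3"

definition J3 :: "complex \<Rightarrow> (nat \<Rightarrow> complex) \<Rightarrow> complex" where
  "J3 \<beta> x = Q0 \<beta> x * Q1 \<beta> x * Q2 \<beta> x"

definition pd :: "nat \<Rightarrow> ((nat \<Rightarrow> complex) \<Rightarrow> complex) \<Rightarrow> (nat \<Rightarrow> complex) \<Rightarrow> complex" where
  "pd i F x = deriv (\<lambda>t. F (x(i := t))) (x i)"

definition pmat :: "(nat \<Rightarrow> complex) \<Rightarrow> nat \<Rightarrow> nat \<Rightarrow> complex" where
  "pmat x i j =
     (if (i, j) = (0, 1) then x 0 * x 1 else if (i, j) = (1, 0) then - (x 0 * x 1)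
      else if (i, j) = (0, 3) then x 0 * x 3 else if (i, j) = (3, 0) then - (x 0 * x 3)
      else if (i, j) = (1, 2) then x 1 * x 2 else if (i, j) = (2, 1) then - (x 1 * x 2)
      else if (i, j) = (2, 3) then x 2 * x 3 else if (i, j) = (3, 2) then - (x 2 * x 3)
      else 0)"

definition pbr :: "((nat \<Rightarrow> complex) \<Rightarrow> complex) \<Rightarrow> ((nat \<Rightarrow> complex) \<Rightarrow> complex)
                    \<Rightarrow> (nat \<Rightarrow> complex) \<Rightarrow> complex" where
  "pbr F G x = (\<Sum>i<4. \<Sum>j<4. pmat x i j * pd i F x * pd j G x)"

fun chebT :: "nat \<Rightarrow> complex \<Rightarrow> complex" where
  "chebT 0 c = 1"
| "chebT (Suc 0) c = c"
| "chebT (Suc (Suc n)) c = 2 * c * chebT (Suc n) c - chebT n c"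

fun chebU :: "nat \<Rightarrow> complex \<Rightarrow> complex" where
  "chebU 0 c = 1"
| "chebU (Suc 0) c = 2 * c"
| "chebU (Suc (Suc n)) c = 2 * c * chebU (Suc n) c - chebU n c"

end

theory Submission
  imports Defs
begin


definition gQ0 :: "complex \<Rightarrow> (nat \<Rightarrow> complex) \<Rightarrow> nat \<Rightarrow> complex" where
 "gQ0 \<beta> x i = (if i = 0 then 1 / x 1 else if i = 1 then - (x 0 + x 2) / (x 1)^2
     else if i = 2 then 1 / x 1 else 0)"
definition gQ1 :: "complex \<Rightarrow> (nat \<Rightarrow> complex) \<Rightarrow> nat \<Rightarrow> complex" where
 "gQ1 \<beta> x i = (if i = 0 then 0 else if i = 1 then 1 / x 2
     else if i = 2 then - (x 1 + x 3) / (x 2)^2 else if i = 3 then 1 / x 2 else 0)"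
definition gQ2 :: "complex \<Rightarrow> (nat \<Rightarrow> complex) \<Rightarrow> nat \<Rightarrow> complex" where
 "gQ2 \<beta> x i = (if i = 0 then - x 1 / (x 0)^2 - \<beta> / ((x 0)^2 * x 3) else if i = 1 then 1 / x 0
     else if i = 2 then 1 / x 3 else if i = 3 then - x 2 / (x 3)^2 - \<beta> / (x 0 * (x 3)^2) else 0)"

lemma less4: "(i::nat) < 4 \<longleftrightarrow> i = 0 \<or> i = 1 \<or> i = 2 \<or> i = 3" by auto

lemma hasQ0:
  assumes nz: "\<forall>i<4. x i \<noteq> 0" and i: "i < 4"
  shows "((\<lambda>t. Q0 \<beta> (x(i:=t))) has_field_derivative gQ0 \<beta> x i) (at (x i))"
proof -
  have n: "x 0 \<noteq> 0" "x 1 \<noteq> 0" "x 2 \<noteq> 0" "x 3 \<noteq> 0" "x (Suc 0) \<noteq> 0" using nz by auto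
  show ?thesis using i unfolding less4
    apply (elim disjE)
    apply (simp_all add: Q0_def gQ0_def)
    apply (auto intro!: derivative_eq_intros simp: n field_simps power2_eq_square)
    done
qed

lemma hasQ1:
  assumes nz: "\<forall>i<4. x i \<noteq> 0" and i: "i < 4"
  shows "((\<lambda>t. Q1 \<beta> (x(i:=t))) has_field_derivative gQ1 \<beta> x i) (at (x i))"
proof -
  have n: "x 0 \<noteq> 0" "x 1 \<noteq> 0" "x 2 \<noteq> 0" "x 3 \<noteq> 0" "x (Suc 0) \<noteq> 0" using nz by auto
  show ?thesis using i unfolding less4
    apply (elim disjE)
    apply (simp_all add: Q1_def gQ1_def)
    apply (auto intro!: derivative_eq_intros simp: n field_simps power2_eq_square)
    done
qed

lemma hasQ2:
  assumes nz: "\<forall>i<4. x i \<noteq> 0" and i: "i < 4"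
  shows "((\<lambda>t. Q2 \<beta> (x(i:=t))) has_field_derivative gQ2 \<beta> x i) (at (x i))"
proof -
  have n: "x 0 \<noteq> 0" "x 1 \<noteq> 0" "x 2 \<noteq> 0" "x 3 \<noteq> 0" "x (Suc 0) \<noteq> 0" using nz by auto
  show ?thesis using i unfolding less4
    apply (elim disjE)
    apply (simp_all add: Q2_def gQ2_def)
    apply (auto intro!: derivative_eq_intros simp: n field_simps power2_eq_square)
    done
qed

lemma pdQ:
  assumes "\<forall>i<4. x i \<noteq> 0" "i < 4"
  shows "pd i (Q0 \<beta>) x = gQ0 \<beta> x i" "pd i (Q1 \<beta>) x = gQ1 \<beta> x i" "pd i (Q2 \<beta>) x = gQ2 \<beta> x i"
  unfolding pd_def using hasQ0[OF assms] hasQ1[OF assms] hasQ2[OF assms] by (simp_all add: DERIV_imp_deriv)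

lemma pdJ:
  assumes "\<forall>i<4. x i \<noteq> 0" "i < 4"
  shows "pd i (J1 \<beta>) x = (Q1 \<beta> x * Q2 \<beta> x - 1) * gQ0 \<beta> x i + (Q0 \<beta> x * Q2 \<beta> x - 1) * gQ1 \<beta> x i
            + (Q0 \<beta> x * Q1 \<beta> x - 1) * gQ2 \<beta> x i"
   "pd i (J2 \<beta>) x = (Q1 \<beta> x + Q2 \<beta> x) * gQ0 \<beta> x i + (Q0 \<beta> x + Q2 \<beta> x) * gQ1 \<beta> x i
            + (Q0 \<beta> x + Q1 \<beta> x) * gQ2 \<beta> x i"
   "pd i (J3 \<beta>) x = (Q1 \<beta> x * Q2 \<beta> x) * gQ0 \<beta> x i + (Q0 \<beta> x * Q2 \<beta> x) * gQ1 \<beta> x i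
            + (Q0 \<beta> x * Q1 \<beta> x) * gQ2 \<beta> x i"
proof -
  note h = hasQ0[OF assms, of \<beta>] hasQ1[OF assms, of \<beta>] hasQ2[OF assms, of \<beta>]
  have xx: "x(i := x i) = x" by simp
  have "((\<lambda>t. J1 \<beta> (x(i:=t))) has_field_derivative ((Q1 \<beta> x * Q2 \<beta> x - 1) * gQ0 \<beta> x i + (Q0 \<beta> x * Q2 \<beta> x - 1) * gQ1 \<beta> x i
            + (Q0 \<beta> x * Q1 \<beta> x - 1) * gQ2 \<beta> x i)) (at (x i))"
    unfolding J1_def by (rule derivative_eq_intros h | simp only: xx)+ (simp add: algebra_simps)
  then show "pd i (J1 \<beta>) x = (Q1 \<beta> x * Q2 \<beta> x - 1) * gQ0 \<beta> x i + (Q0 \<beta> x * Q2 \<beta> x - 1) * gQ1 \<beta> x i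
            + (Q0 \<beta> x * Q1 \<beta> x - 1) * gQ2 \<beta> x i" unfolding pd_def by (rule DERIV_imp_deriv)
  have "((\<lambda>t. J2 \<beta> (x(i:=t))) has_field_derivative ((Q1 \<beta> x + Q2 \<beta> x) * gQ0 \<beta> x i + (Q0 \<beta> x + Q2 \<beta> x) * gQ1 \<beta> x i
            + (Q0 \<beta> x + Q1 \<beta> x) * gQ2 \<beta> x i)) (at (x i))"
    unfolding J2_def by (rule derivative_eq_intros h | simp only: xx)+ (simp add: algebra_simps)
  then show "pd i (J2 \<beta>) x = (Q1 \<beta> x + Q2 \<beta> x) * gQ0 \<beta> x i + (Q0 \<beta> x + Q2 \<beta> x) * gQ1 \<beta> x i
            + (Q0 \<beta> x + Q1 \<beta> x) * gQ2 \<beta> x i" unfolding pd_def by (rule DERIV_imp_deriv)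
  have "((\<lambda>t. J3 \<beta> (x(i:=t))) has_field_derivative ((Q1 \<beta> x * Q2 \<beta> x) * gQ0 \<beta> x i + (Q0 \<beta> x * Q2 \<beta> x) * gQ1 \<beta> x i
            + (Q0 \<beta> x * Q1 \<beta> x) * gQ2 \<beta> x i)) (at (x i))"
    unfolding J3_def by (rule derivative_eq_intros h | simp only: xx)+ (simp add: algebra_simps)
  then show "pd i (J3 \<beta>) x = (Q1 \<beta> x * Q2 \<beta> x) * gQ0 \<beta> x i + (Q0 \<beta> x * Q2 \<beta> x) * gQ1 \<beta> x i
            + (Q0 \<beta> x * Q1 \<beta> x) * gQ2 \<beta> x i" unfolding pd_def by (rule DERIV_imp_deriv)
qed



definition bl :: "(nat \<Rightarrow> complex) \<Rightarrow> (nat \<Rightarrow> complex) \<Rightarrow> (nat \<Rightarrow> complex) \<Rightarrow> complex" where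
  "bl x u v = (\<Sum>i<4. \<Sum>j<4. pmat x i j * u i * v j)"

lemma bl_explicit: "bl x u v = x 0 * x 1 * (u 0 * v 1 - u 1 * v 0) + x 0 * x 3 * (u 0 * v 3 - u 3 * v 0)
   + x 1 * x 2 * (u 1 * v 2 - u 2 * v 1) + x 2 * x 3 * (u 2 * v 3 - u 3 * v 2)"
  unfolding bl_def by (simp add: numeral_eq_Suc lessThan_Suc pmat_def algebra_simps)

lemma bl_expand:
  "bl x (\<lambda>i. a0 * g0 i + a1 * g1 i + a2 * g2 i) (\<lambda>j. b0 * g0 j + b1 * g1 j + b2 * g2 j)
   = a0*b1*bl x g0 g1 + a0*b2*bl x g0 g2 + a1*b0*bl x g1 g0 + a1*b2*bl x g1 g2
     + a2*b0*bl x g2 g0 + a2*b1 * bl x g2 g1"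
  unfolding bl_explicit by (simp add: algebra_simps)

lemma bl_anti: "bl x u v = - bl x v u" unfolding bl_explicit by (simp add: algebra_simps)

lemma blQ:
  assumes nz: "\<forall>i<4. x i \<noteq> 0"
  shows "bl x (gQ0 \<beta> x) (gQ1 \<beta> x) = 2 * (Q0 \<beta> x * Q1 \<beta> x - 1)"
        "bl x (gQ1 \<beta> x) (gQ2 \<beta> x) = 2 * (Q1 \<beta> x * Q2 \<beta> x - 1)"
        "bl x (gQ2 \<beta> x) (gQ0 \<beta> x) = 2 * (Q2 \<beta> x * Q0 \<beta> x - 1)"
proof -
  have n: "x 0 \<noteq> 0" "x 1 \<noteq> 0" "x 2 \<noteq> 0" "x 3 \<noteq> 0" using nz by auto
  show "bl x (gQ0 \<beta> x) (gQ1 \<beta> x) = 2 * (Q0 \<beta> x * Q1 \<beta> x - 1)"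
    unfolding bl_explicit gQ0_def gQ1_def Q0_def Q1_def using n by (simp add: field_simps power2_eq_square)
  show "bl x (gQ1 \<beta> x) (gQ2 \<beta> x) = 2 * (Q1 \<beta> x * Q2 \<beta> x - 1)"
    unfolding bl_explicit gQ2_def gQ1_def Q2_def Q1_def using n by (simp add: field_simps power2_eq_square)
  show "bl x (gQ2 \<beta> x) (gQ0 \<beta> x) = 2 * (Q2 \<beta> x * Q0 \<beta> x - 1)"
    unfolding bl_explicit gQ2_def gQ0_def Q2_def Q0_def using n by (simp add: field_simps power2_eq_square)
qed



lemma bl_cong: "(\<forall>i<4. u i = u' i) \<Longrightarrow> (\<forall>i<4. v i = v' i) \<Longrightarrow> bl x u v = bl x u' v'"
  by (simp add: bl_def)

lemma pbr_bl: "pbr F G x = bl x (\<lambda>i. pd i F x) (\<lambda>j. pd j G x)"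
  by (simp add: pbr_def bl_def)

lemma poisson:
  assumes nz: "\<forall>i<4. x i \<noteq> 0"
  shows "pbr (J1 \<beta>) (J2 \<beta>) x = 0 \<and> pbr (J1 \<beta>) (J3 \<beta>) x = 0 \<and>
          pbr (J1 \<beta>) (Q0 \<beta>) x = 0 \<and> pbr (J1 \<beta>) (Q1 \<beta>) x = 0 \<and> pbr (J1 \<beta>) (Q2 \<beta>) x = 0"
proof -
  define q0 where "q0 = Q0 \<beta> x"
  define q1 where "q1 = Q1 \<beta> x"
  define q2 where "q2 = Q2 \<beta> x"
  let ?g0 = "gQ0 \<beta> x" let ?g1 = "gQ1 \<beta> x" let ?g2 = "gQ2 \<beta> x"
  have B: "bl x ?g0 ?g1 = 2 * (q0 * q1 - 1)" "bl x ?g1 ?g2 = 2 * (q1 * q2 - 1)" "bl x ?g2 ?g0 = 2 * (q2 * q0 - 1)"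
     "bl x ?g1 ?g0 = - (2 * (q0 * q1 - 1))" "bl x ?g2 ?g1 = - (2 * (q1 * q2 - 1))" "bl x ?g0 ?g2 = - (2 * (q2 * q0 - 1))"
    using blQ[OF nz, of \<beta>] bl_anti[of x ?g1 ?g0] bl_anti[of x ?g2 ?g1] bl_anti[of x ?g0 ?g2]
    by (simp_all add: q0_def q1_def q2_def)
  have gen: "pbr (J1 \<beta>) G x = 0"
    if hG: "\<forall>j<4. pd j G x = b0 * ?g0 j + b1 * ?g1 j + b2 * ?g2 j"
    and e: "(q1*q2-1)*b1*(2 * (q0 * q1 - 1)) + (q1*q2-1)*b2*(- (2 * (q2 * q0 - 1)))
       + (q0*q2-1)*b0*(- (2 * (q0 * q1 - 1))) + (q0*q2-1)*b2*(2 * (q1 * q2 - 1))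
       + (q0*q1-1)*b0*(2 * (q2 * q0 - 1)) + (q0*q1-1)*b1*(- (2 * (q1 * q2 - 1))) = 0"
    for G b0 b1 b2
  proof -
    have "pbr (J1 \<beta>) G x = bl x (\<lambda>i. (q1*q2-1) * ?g0 i + (q0*q2-1) * ?g1 i + (q0*q1-1) * ?g2 i)
                 (\<lambda>j. b0 * ?g0 j + b1 * ?g1 j + b2 * ?g2 j)"
      unfolding pbr_bl by (rule bl_cong) (use hG pdJ[OF nz] in \<open>auto simp: q0_def q1_def q2_def\<close>)
    also have "\<dots> = 0" unfolding bl_expand B using e by (simp add: algebra_simps)
    finally show ?thesis .
  qed
  show ?thesis
  proof (intro conjI)
    show "pbr (J1 \<beta>) (J2 \<beta>) x = 0"
      by (rule gen[of _ "q1+q2" "q0+q2" "q0+q1"]) (use pdJ[OF nz] in \<open>auto simp: q0_def q1_def q2_def algebra_simps\<close>)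
    show "pbr (J1 \<beta>) (J3 \<beta>) x = 0"
      by (rule gen[of _ "q1*q2" "q0*q2" "q0*q1"]) (use pdJ[OF nz] in \<open>auto simp: q0_def q1_def q2_def algebra_simps\<close>)
    show "pbr (J1 \<beta>) (Q0 \<beta>) x = 0"
      by (rule gen[of _ 1 0 0]) (use pdQ[OF nz] in \<open>auto simp: q0_def q1_def q2_def algebra_simps\<close>)
    show "pbr (J1 \<beta>) (Q1 \<beta>) x = 0"
      by (rule gen[of _ 0 1 0]) (use pdQ[OF nz] in \<open>auto simp: q0_def q1_def q2_def algebra_simps\<close>)
    show "pbr (J1 \<beta>) (Q2 \<beta>) x = 0"
      by (rule gen[of _ 0 0 1]) (use pdQ[OF nz] in \<open>auto simp: q0_def q1_def q2_def algebra_simps\<close>)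
  qed
qed



lemma aux_Q2:
  fixes a b c d \<beta> :: complex
  assumes "a \<noteq> 0" "b \<noteq> 0" "d \<noteq> 0" "b * d + \<beta> \<noteq> 0"
  shows "c / b + d / ((b * d + \<beta>) / a) + \<beta> / (b * ((b * d + \<beta>) / a)) = (a + c) / b"
proof -
  obtain e where e: "e = b * d + \<beta>" by simp
  have en: "e \<noteq> 0" using assms e by simp
  have "d / (e / a) + \<beta> / (b * (e / a)) = a * (b * d + \<beta>) / (b * e)"
    using assms en by (simp add: field_simps)
  also have "\<dots> = a / b" using assms en e by simp
  finally have *: "d / (e / a) + \<beta> / (b * (e / a)) = a / b" .
  have "c / b + d / ((b * d + \<beta>) / a) + \<beta> / (b * ((b * d + \<beta>) / a)) = c / b + (d / (e / a) + \<beta> / (b * (e / a)))"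
    using e by (simp add: add.assoc)
  also have "\<dots> = (a + c) / b" unfolding * by (simp add: add_divide_distrib)
  finally show ?thesis .
qed

lemma Qphi:
  assumes nz: "\<forall>i<4. x i \<noteq> 0" and p: "phi \<beta> x 3 \<noteq> 0"
  shows "Q0 \<beta> (phi \<beta> x) = Q1 \<beta> x" "Q1 \<beta> (phi \<beta> x) = Q2 \<beta> x" "Q2 \<beta> (phi \<beta> x) = Q0 \<beta> x"
proof -
  have n: "x 0 \<noteq> 0" "x 1 \<noteq> 0" "x 2 \<noteq> 0" "x 3 \<noteq> 0" using nz by auto
  have p': "x 1 * x 3 + \<beta> \<noteq> 0" using p n by (simp add: phi_def)
  have ph: "phi \<beta> x 0 = x 1" "phi \<beta> x 1 = x 2" "phi \<beta> x 2 = x 3" "phi \<beta> x 3 = (x 1 * x 3 + \<beta>)/x 0"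
    by (simp_all add: phi_def numeral_2_eq_2 numeral_3_eq_3)
  show "Q0 \<beta> (phi \<beta> x) = Q1 \<beta> x" unfolding Q0_def Q1_def ph by (rule refl)
  show "Q1 \<beta> (phi \<beta> x) = Q2 \<beta> x" unfolding Q2_def Q1_def ph using n by (simp add: field_simps)
  show "Q2 \<beta> (phi \<beta> x) = Q0 \<beta> x" unfolding Q2_def Q0_def ph using aux_Q2[OF n(1) n(2) n(4) p'] by simp
qed

lemma conserved:
  assumes "(\<forall>i<4. x i \<noteq> 0) \<and> phi \<beta> x 3 \<noteq> 0"
  shows "J1 \<beta> (phi \<beta> x) = J1 \<beta> x \<and> J2 \<beta> (phi \<beta> x) = J2 \<beta> x \<and> J3 \<beta> (phi \<beta> x) = J3 \<beta> x"
  using Qphi[of x \<beta>] assms by (simp add: J1_def J2_def J3_def algebra_simps)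

lemma indep_gen:
  assumes nz: "\<forall>i<4. x i \<noteq> 0"
    and d: "Q0 \<beta> x \<noteq> Q1 \<beta> x" "Q1 \<beta> x \<noteq> Q2 \<beta> x" "Q0 \<beta> x \<noteq> Q2 \<beta> x"
    and g: "\<And>w0 w1 w2. (\<forall>i<4. w0 * gQ0 \<beta> x i + w1 * gQ1 \<beta> x i + w2 * gQ2 \<beta> x i = 0) \<Longrightarrow> w0 = 0 \<and> w1 = 0 \<and> w2 = 0"
  shows "\<forall>a b c. (\<forall>i<4. a * pd i (J1 \<beta>) x + b * pd i (J2 \<beta>) x + c * pd i (J3 \<beta>) x = 0)
                   \<longrightarrow> a = 0 \<and> b = 0 \<and> c = 0"
proof (intro allI impI)
  fix a b c
  assume h: "\<forall>i<4. a * pd i (J1 \<beta>) x + b * pd i (J2 \<beta>) x + c * pd i (J3 \<beta>) x = 0"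
  define q0 where "q0 = Q0 \<beta> x"
  define q1 where "q1 = Q1 \<beta> x"
  define q2 where "q2 = Q2 \<beta> x"
  have "\<forall>i<4. (a*(q1*q2-1) + b*(q1+q2) + c*(q1*q2)) * gQ0 \<beta> x i + (a*(q0*q2-1) + b*(q0+q2) + c*(q0*q2)) * gQ1 \<beta> x i
     + (a*(q0*q1-1) + b*(q0+q1) + c*(q0*q1)) * gQ2 \<beta> x i = 0"
  proof (intro allI impI)
    fix i :: nat assume i: "i < 4"
    show "(a*(q1*q2-1) + b*(q1+q2) + c*(q1*q2)) * gQ0 \<beta> x i + (a*(q0*q2-1) + b*(q0+q2) + c*(q0*q2)) * gQ1 \<beta> x i
     + (a*(q0*q1-1) + b*(q0+q1) + c*(q0*q1)) * gQ2 \<beta> x i = 0"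
      using h[rule_format, OF i] unfolding pdJ[OF nz i] q0_def q1_def q2_def by (simp add: algebra_simps)
  qed
  from g[OF this] have w: "a*(q1*q2-1) + b*(q1+q2) + c*(q1*q2) = 0" "a*(q0*q2-1) + b*(q0+q2) + c*(q0*q2) = 0"
     "a*(q0*q1-1) + b*(q0+q1) + c*(q0*q1) = 0" by auto
  have "(q1 - q0) * ((a+c)*q2 + b) = (a*(q1*q2-1) + b*(q1+q2) + c*(q1*q2)) - (a*(q0*q2-1) + b*(q0+q2) + c*(q0*q2))"
    by (simp add: algebra_simps)
  hence e1: "(q1 - q0) * ((a+c)*q2 + b) = 0" using w(1) w(2) by simp
  have "(q2 - q1) * ((a+c)*q0 + b) = (a*(q0*q2-1) + b*(q0+q2) + c*(q0*q2)) - (a*(q0*q1-1) + b*(q0+q1) + c*(q0*q1))"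
    by (simp add: algebra_simps)
  hence e2: "(q2 - q1) * ((a+c)*q0 + b) = 0" using w(2) w(3) by simp
  have f1: "(a+c)*q2 + b = 0" using e1 d by (simp add: q0_def q1_def)
  have f2: "(a+c)*q0 + b = 0" using e2 d by (simp add: q2_def q1_def)
  have "(a+c)*(q2 - q0) = ((a+c)*q2 + b) - ((a+c)*q0 + b)" by (simp add: algebra_simps)
  hence "(a+c)*(q2 - q0) = 0" using f1 f2 by simp
  hence ac: "a + c = 0" using d by (simp add: q0_def q2_def)
  hence b0: "b = 0" using f1 by simp
  have "c = (a + c) - a" by simp
  hence "c = -a" using ac by simp
  hence "a = 0" using w(1) b0 by (simp add: algebra_simps)
  thus "a = 0 \<and> b = 0 \<and> c = 0" using b0 ac by simp
qed

lemma indep: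
  "\<exists>x. (\<forall>i<4. x i \<noteq> 0) \<and>
          (\<forall>a b c. (\<forall>i<4. a * pd i (J1 \<beta>) x + b * pd i (J2 \<beta>) x + c * pd i (J3 \<beta>) x = 0)
                   \<longrightarrow> a = 0 \<and> b = 0 \<and> c = 0)"
proof (cases "\<beta> = 1 \<or> \<beta> = 3 \<or> \<beta> = -1")
  case False
  define x :: "nat \<Rightarrow> complex" where "x = (\<lambda>i. if i = 3 then 2 else 1)"
  have nz: "\<forall>i<4. x i \<noteq> 0" by (simp add: x_def)
  show ?thesis
  proof (intro exI conjI)
    show "\<forall>i<4. x i \<noteq> 0" by (rule nz)
    show "\<forall>a b c. (\<forall>i<4. a * pd i (J1 \<beta>) x + b * pd i (J2 \<beta>) x + c * pd i (J3 \<beta>) x = 0)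
                   \<longrightarrow> a = 0 \<and> b = 0 \<and> c = 0"
    proof (rule indep_gen[OF nz])
      show "Q0 \<beta> x \<noteq> Q1 \<beta> x" "Q1 \<beta> x \<noteq> Q2 \<beta> x" "Q0 \<beta> x \<noteq> Q2 \<beta> x"
        using False by (auto simp: x_def Q0_def Q1_def Q2_def field_simps)
      fix w0 w1 w2
      assume "\<forall>i<4. w0 * gQ0 \<beta> x i + w1 * gQ1 \<beta> x i + w2 * gQ2 \<beta> x i = 0"
      hence e: "w0 * gQ0 \<beta> x 0 + w1 * gQ1 \<beta> x 0 + w2 * gQ2 \<beta> x 0 = 0"
        "w0 * gQ0 \<beta> x 1 + w1 * gQ1 \<beta> x 1 + w2 * gQ2 \<beta> x 1 = 0"
        "w0 * gQ0 \<beta> x 3 + w1 * gQ1 \<beta> x 3 + w2 * gQ2 \<beta> x 3 = 0" by auto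
      hence e': "w0 - w2 * (2 + \<beta>) / 2 = 0" "-2 * w0 + w1 + w2 = 0" "w1 - w2 * (1 + \<beta>) / 4 = 0"
        by (simp_all add: x_def gQ0_def gQ1_def gQ2_def field_simps)
      have "w2 * (-3 - 3 * \<beta>) = 0" using e' by (simp add: field_simps) algebra
      hence "w2 = 0" using False by auto
      thus "w0 = 0 \<and> w1 = 0 \<and> w2 = 0" using e' by simp
    qed
  qed
next
  case True
  define x :: "nat \<Rightarrow> complex" where "x = (\<lambda>i. if i = 3 then 3 else 1)"
  have nz: "\<forall>i<4. x i \<noteq> 0" by (simp add: x_def)
  show ?thesis
  proof (intro exI conjI)
    show "\<forall>i<4. x i \<noteq> 0" by (rule nz)
    show "\<forall>a b c. (\<forall>i<4. a * pd i (J1 \<beta>) x + b * pd i (J2 \<beta>) x + c * pd i (J3 \<beta>) x = 0)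
                   \<longrightarrow> a = 0 \<and> b = 0 \<and> c = 0"
    proof (rule indep_gen[OF nz])
      show "Q0 \<beta> x \<noteq> Q1 \<beta> x" "Q1 \<beta> x \<noteq> Q2 \<beta> x" "Q0 \<beta> x \<noteq> Q2 \<beta> x"
        using True by (auto simp: x_def Q0_def Q1_def Q2_def field_simps)
      fix w0 w1 w2
      assume "\<forall>i<4. w0 * gQ0 \<beta> x i + w1 * gQ1 \<beta> x i + w2 * gQ2 \<beta> x i = 0"
      hence e: "w0 * gQ0 \<beta> x 0 + w1 * gQ1 \<beta> x 0 + w2 * gQ2 \<beta> x 0 = 0"
        "w0 * gQ0 \<beta> x 1 + w1 * gQ1 \<beta> x 1 + w2 * gQ2 \<beta> x 1 = 0"
        "w0 * gQ0 \<beta> x 3 + w1 * gQ1 \<beta> x 3 + w2 * gQ2 \<beta> x 3 = 0" by auto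
      hence e': "w0 - w2 * (3 + \<beta>) / 3 = 0" "-2 * w0 + w1 + w2 = 0" "w1 - w2 * (1 + \<beta>) / 9 = 0"
        by (simp_all add: x_def gQ0_def gQ1_def gQ2_def field_simps)
      have "w2 * (-8 - 5 * \<beta>) = 0" using e' by (simp add: field_simps) algebra
      hence "w2 = 0" using True by auto
      thus "w0 = 0 \<and> w1 = 0 \<and> w2 = 0" using e' by simp
    qed
  qed
qed



lemma cheb_sol:
  fixes y :: "nat \<Rightarrow> complex"
  assumes r: "\<And>n. y (n + 2) = 2 * c * y (n + 1) - y n"
    and i0: "A + B = y 0" and i1: "A * c + B * (2 * c) = y 1"
  shows "y n = A * chebT n c + B * chebU n c"
proof -
  have "y n = A * chebT n c + B * chebU n c \<and> y (Suc n) = A * chebT (Suc n) c + B * chebU (Suc n) c"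
  proof (induction n)
    case 0 then show ?case using i0 i1 by simp
  next
    case (Suc n)
    have "y (Suc (Suc n)) = 2 * c * y (Suc n) - y n" using r[of n] by simp
    also have "\<dots> = A * chebT (Suc (Suc n)) c + B * chebU (Suc (Suc n)) c"
      using Suc.IH by (simp add: algebra_simps)
    finally show ?case using Suc.IH by simp
  qed
  thus ?thesis by simp
qed

lemma orbit:
  fixes x :: "nat \<Rightarrow> complex"
  assumes nz: "\<forall>n. x n \<noteq> 0" and rec: "\<forall>n. x (n + 4) = (x (n + 1) * x (n + 3) + \<beta>) / x n"
  shows "(\<forall>n. x (n + 6) - J1 \<beta> x * x (n + 3) + x n = 0) \<and>
        (J1 \<beta> x \<noteq> 0 \<longrightarrow>
          (\<forall>n. \<forall>j<3. x (3 * n + j) =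
              (2 * x j - 2 * x (j + 3) / J1 \<beta> x) * chebT n (J1 \<beta> x / 2)
              + (- x j + 2 * x (j + 3) / J1 \<beta> x) * chebU n (J1 \<beta> x / 2)))"
proof -
  define q where "q n = (x n + x (n + 2)) / x (n + 1)" for n
  have rec': "x n * x (n + 4) = x (n + 1) * x (n + 3) + \<beta>" for n
    using rec nz by (simp add: field_simps)
  have L1: "x (n + 2) = q n * x (n + 1) - x n" for n
    using nz[rule_format, of "n+1"] by (simp add: q_def field_simps)
  have L2: "q (n + 3) = q n" for n
  proof -
    have a: "x n * x (n + 4) = x (n + 1) * x (n + 3) + \<beta>" by (rule rec')
    have b: "x (n + 1) * x (n + 5) = x (n + 2) * x (n + 4) + \<beta>"
      using rec'[of "n+1"] by (simp add: ac_simps)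
    have "(x (n + 3) + x (n + 5)) * x (n + 1) = (x n + x (n + 2)) * x (n + 4)"
      using a b by (simp add: algebra_simps)
    hence fr: "(x (n + 3) + x (n + 5)) / x (n + 4) = (x n + x (n + 2)) / x (n + 1)"
      using nz by (simp add: frac_eq_eq)
    have idx: "n + 3 + 2 = n + 5" "n + 3 + 1 = n + 4" by simp_all
    show ?thesis unfolding q_def idx by (rule fr)
  qed
  have L3: "Q0 \<beta> x = q 0" "Q1 \<beta> x = q 1" "Q2 \<beta> x = q 2"
  proof -
    show "Q0 \<beta> x = q 0" by (simp add: Q0_def q_def One_nat_def numeral_2_eq_2)
    show "Q1 \<beta> x = q 1" by (simp add: Q1_def q_def One_nat_def numeral_2_eq_2 numeral_3_eq_3)
    have x4: "x 4 = (x 1 * x 3 + \<beta>) / x 0" using rec[rule_format, of 0] by simp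
    have q2: "q 2 = (x 2 + x 4) / x 3" by (simp add: q_def)
    show "Q2 \<beta> x = q 2" using nz[rule_format, of 0] nz[rule_format, of 3] unfolding q2 x4 Q2_def
      by (simp add: field_simps)
  qed
  define J where "J = J1 \<beta> x"
  have L4: "J = q n * q (n + 1) * q (n + 2) - q n - q (n + 1) - q (n + 2)" for n
  proof (induction n)
    case 0 show ?case unfolding J_def J1_def L3 by (simp add: numeral_2_eq_2)
  next
    case (Suc n)
    have "q (Suc n + 2) = q n" using L2[of n] by (simp add: eval_nat_numeral)
    then show ?case using Suc.IH by (simp add: algebra_simps eval_nat_numeral)
  qed
  have L5: "x (n + 6) - J * x (n + 3) + x n = 0" for n
  proof -
    have e2: "x (n + 2) = q n * x (n + 1) - x n" by (rule L1)
    have e3: "x (n + 3) = q (n+1) * x (n + 2) - x (n + 1)" using L1[of "n+1"] by (simp add: eval_nat_numeral)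
    have e4: "x (n + 4) = q (n+2) * x (n + 3) - x (n + 2)" using L1[of "n+2"] by (simp add: eval_nat_numeral)
    have e5: "x (n + 5) = q n * x (n + 4) - x (n + 3)" using L1[of "n+3"] L2[of n] by (simp add: eval_nat_numeral)
    have e6: "x (n + 6) = q (n+1) * x (n + 5) - x (n + 4)" using L1[of "n+4"] L2[of "n+1"] by (simp add: eval_nat_numeral)
    show ?thesis unfolding e6 e5 e4 e3 e2 L4[of n] by (simp add: algebra_simps)
  qed
  show ?thesis
  proof (intro conjI impI allI)
    show "x (n + 6) - J1 \<beta> x * x (n + 3) + x n = 0" for n using L5[of n] by (simp add: J_def)
    fix n j :: nat
    assume J0: "J1 \<beta> x \<noteq> 0" and "j < 3"
    show "x (3 * n + j) =
              (2 * x j - 2 * x (j + 3) / J1 \<beta> x) * chebT n (J1 \<beta> x / 2)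
              + (- x j + 2 * x (j + 3) / J1 \<beta> x) * chebU n (J1 \<beta> x / 2)"
    proof -
      have "x (3 * n + j) = (2 * x j - 2 * x (j + 3) / J) * chebT n (J / 2)
              + (- x j + 2 * x (j + 3) / J) * chebU n (J / 2)"
      proof (rule cheb_sol[where y = "\<lambda>n. x (3 * n + j)"])
        fix m
        have "x ((3 * m + j) + 6) = J * x ((3 * m + j) + 3) - x (3 * m + j)"
          using L5[of "3 * m + j"] by (simp add: algebra_simps)
        thus "x (3 * (m + 2) + j) = 2 * (J / 2) * x (3 * (m + 1) + j) - x (3 * m + j)"
          by (simp add: algebra_simps)
      next
        show "2 * x j - 2 * x (j + 3) / J + (- x j + 2 * x (j + 3) / J) = x (3 * 0 + j)" by simp
        show "(2 * x j - 2 * x (j + 3) / J) * (J / 2) + (- x j + 2 * x (j + 3) / J) * (2 * (J / 2)) = x (3 * 1 + j)"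
          using J0 unfolding J_def[symmetric] by (simp add: field_simps)
      qed
      thus "x (3 * n + j) =
              (2 * x j - 2 * x (j + 3) / J1 \<beta> x) * chebT n (J1 \<beta> x / 2)
              + (- x j + 2 * x (j + 3) / J1 \<beta> x) * chebU n (J1 \<beta> x / 2)" by (simp add: J_def)
    qed
  qed
qed


theorem theorem3p9:
  fixes \<beta> :: complex
  shows
    \<comment> \<open>conserved quantities (on the domain where both sides are defined)\<close>
    "(\<forall>x. (\<forall>i<4. x i \<noteq> 0) \<and> phi \<beta> x 3 \<noteq> 0 \<longrightarrow>
          J1 \<beta> (phi \<beta> x) = J1 \<beta> x \<and> J2 \<beta> (phi \<beta> x) = J2 \<beta> x \<and> J3 \<beta> (phi \<beta> x) = J3 \<beta> x)
   \<and> \<comment> \<open>functional independence: gradients linearly independent at some regular point\<close>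
     (\<exists>x. (\<forall>i<4. x i \<noteq> 0) \<and>
          (\<forall>a b c. (\<forall>i<4. a * pd i (J1 \<beta>) x + b * pd i (J2 \<beta>) x + c * pd i (J3 \<beta>) x = 0)
                   \<longrightarrow> a = 0 \<and> b = 0 \<and> c = 0))
   \<and> \<comment> \<open>Poisson brackets\<close>
     (\<forall>x. (\<forall>i<4. x i \<noteq> 0) \<longrightarrow>
          pbr (J1 \<beta>) (J2 \<beta>) x = 0 \<and> pbr (J1 \<beta>) (J3 \<beta>) x = 0 \<and>
          pbr (J1 \<beta>) (Q0 \<beta>) x = 0 \<and> pbr (J1 \<beta>) (Q1 \<beta>) x = 0 \<and> pbr (J1 \<beta>) (Q2 \<beta>) x = 0)
   \<and> \<comment> \<open>linear recurrence and explicit solution along orbits\<close>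
     (\<forall>x :: nat \<Rightarrow> complex.
        (\<forall>n. x n \<noteq> 0) \<and> (\<forall>n. x (n + 4) = (x (n + 1) * x (n + 3) + \<beta>) / x n) \<longrightarrow>
        (\<forall>n. x (n + 6) - J1 \<beta> x * x (n + 3) + x n = 0) \<and>
        (J1 \<beta> x \<noteq> 0 \<longrightarrow>
          (\<forall>n. \<forall>j<3. x (3 * n + j) =
              (2 * x j - 2 * x (j + 3) / J1 \<beta> x) * chebT n (J1 \<beta> x / 2)
              + (- x j + 2 * x (j + 3) / J1 \<beta> x) * chebU n (J1 \<beta> x / 2))))"
  proof (intro conjI)
  show "\<forall>x. (\<forall>i<4. x i \<noteq> 0) \<and> phi \<beta> x 3 \<noteq> 0 \<longrightarrow>
          J1 \<beta> (phi \<beta> x) = J1 \<beta> x \<and> J2 \<beta> (phi \<beta> x) = J2 \<beta> x \<and> J3 \<beta> (phi \<beta> x) = J3 \<beta> x"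
    using conserved by blast
  show "\<exists>x. (\<forall>i<4. x i \<noteq> 0) \<and>
          (\<forall>a b c. (\<forall>i<4. a * pd i (J1 \<beta>) x + b * pd i (J2 \<beta>) x + c * pd i (J3 \<beta>) x = 0)
                   \<longrightarrow> a = 0 \<and> b = 0 \<and> c = 0)" by (rule indep)
  show "\<forall>x. (\<forall>i<4. x i \<noteq> 0) \<longrightarrow>
          pbr (J1 \<beta>) (J2 \<beta>) x = 0 \<and> pbr (J1 \<beta>) (J3 \<beta>) x = 0 \<and>
          pbr (J1 \<beta>) (Q0 \<beta>) x = 0 \<and> pbr (J1 \<beta>) (Q1 \<beta>) x = 0 \<and> pbr (J1 \<beta>) (Q2 \<beta>) x = 0"
    using poisson by blast
  show "\<forall>x :: nat \<Rightarrow> complex.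
        (\<forall>n. x n \<noteq> 0) \<and> (\<forall>n. x (n + 4) = (x (n + 1) * x (n + 3) + \<beta>) / x n) \<longrightarrow>
        (\<forall>n. x (n + 6) - J1 \<beta> x * x (n + 3) + x n = 0) \<and>
        (J1 \<beta> x \<noteq> 0 \<longrightarrow>
          (\<forall>n. \<forall>j<3. x (3 * n + j) =
              (2 * x j - 2 * x (j + 3) / J1 \<beta> x) * chebT n (J1 \<beta> x / 2)
              + (- x j + 2 * x (j + 3) / J1 \<beta> x) * chebU n (J1 \<beta> x / 2)))"
    using orbit by blast
qed

end
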